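(* Let $n\ge 4$ and $1\le k<\frac{n}{2}$ be integers, let $P_1=\{v\subset[n]:|v|=k\}$ and $P_2=\{w\subset [n]:|w|=k+1\}$, and let $f$ be an automorphism of $B(n,k)$. If $n\ne 2k+1$, then $f(P_1)=P_1$ and $f(P_2)=P_2$. If $n=2k+1$, then either $f(P_1)=P_1$ and $f(P_2)=P_2$, or $f(P_1)=P_2$ and $f(P_2)=P_1$.
   Context: For integers $n\ge 4$ and $1\le k<\frac n2$, let $[n]=\{1,\dots,n\}$. The graph $B(n,k)$ has vertex set $V=\{v\subset[n] : |v|\in\{k,k+1\}\}$, and two vertices $v,w$ are adjacent iff $v\subset w$ or $w\subset v$. *)

theory Defs
  imports Main
begin

definition B_vertices :: "nat \<Rightarrow> nat \<Rightarrow> nat set set" where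
  "B_vertices n k = {v. v \<subseteq> {1..n} \<and> (card v = k \<or> card v = k + 1)}"

definition B_adj :: "nat set \<Rightarrow> nat set \<Rightarrow> bool" where
  "B_adj v w \<longleftrightarrow> v \<subset> w \<or> w \<subset> v"

definition B_automorphism :: "nat \<Rightarrow> nat \<Rightarrow> (nat set \<Rightarrow> nat set) \<Rightarrow> bool" where
  "B_automorphism n k f \<longleftrightarrow>
     bij_betw f (B_vertices n k) (B_vertices n k) \<and>
     (\<forall>v\<in>B_vertices n k. \<forall>w\<in>B_vertices n k. B_adj (f v) (f w) \<longleftrightarrow> B_adj v w)"

definition layer :: "nat \<Rightarrow> nat \<Rightarrow> nat set set" where
  "layer n m = {v. v \<subseteq> {1..n} \<and> card v = m}"

end

theory Submission
  imports Defs
begin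

lemma layer_finite: "v \<in> layer n m \<Longrightarrow> finite v"
  unfolding layer_def by (auto intro: finite_subset)

lemma k_conn:
  assumes adj: "\<And>v w. v \<in> B_vertices n k \<Longrightarrow> w \<in> B_vertices n k \<Longrightarrow> B_adj v w \<Longrightarrow> Q v = Q w"
  shows "card (A - B) = m \<Longrightarrow> A \<in> layer n k \<Longrightarrow> B \<in> layer n k \<Longrightarrow> Q A = Q B"
proof (induction m arbitrary: A)
  case 0
  have fA: "finite A" and fB: "finite B" using 0 layer_finite by blast+
  have "A \<subseteq> B" using 0 fA by auto
  moreover have "card A = card B" using 0 unfolding layer_def by auto
  ultimately have "A = B" using fB card_subset_eq by blast
  then show ?case by simp
next
  case (Suc m)
  have fA: "finite A" and fB: "finite B" using Suc layer_finite by blast+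
  have cA: "card A = k" and cB: "card B = k" and sA: "A \<subseteq> {1..n}" and sB: "B \<subseteq> {1..n}"
    using Suc.prems unfolding layer_def by auto
  obtain a where a: "a \<in> A" "a \<notin> B" using Suc.prems(1)
    by (metis Diff_iff card.empty ex_in_conv nat.distinct(1))
  have "card (B - A) = card (A - B)"
    using card_Diff_subset_Int[of A B] card_Diff_subset_Int[of B A] fA fB cA cB
    by (simp add: Int_commute)
  then obtain b where b: "b \<in> B" "b \<notin> A" using Suc.prems(1)
    by (metis Diff_iff card.empty ex_in_conv nat.distinct(1))
  define C where "C = insert b A"
  define A' where "A' = insert b (A - {a})"
  have ab: "a \<noteq> b" using a b by auto
  have Cv: "C \<in> B_vertices n k" unfolding C_def B_vertices_def using b sA sB fA cA by auto
  have Av: "A \<in> B_vertices n k" unfolding B_vertices_def using sA cA by auto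
  have cA': "card A' = k" unfolding A'_def using fA a b cA ab
    by (simp add: card_Diff_singleton) (metis One_nat_def Suc_pred card_gt_0_iff empty_iff)
  have A'l: "A' \<in> layer n k" unfolding layer_def using cA' sA sB b A'_def by auto
  have A'v: "A' \<in> B_vertices n k" using A'l unfolding layer_def B_vertices_def by auto
  have "B_adj A C" unfolding B_adj_def C_def using b by auto
  hence q1: "Q A = Q C" using adj Av Cv by blast
  have "B_adj A' C" unfolding B_adj_def C_def A'_def using a ab by auto
  hence q2: "Q A' = Q C" using adj A'v Cv by blast
  have "A' - B = (A - B) - {a}" unfolding A'_def using b by auto
  hence "card (A' - B) = m" using Suc.prems(1) a fA by simp
  hence "Q A' = Q B" using Suc.IH A'l Suc.prems(3) by blast
  then show ?case using q1 q2 by simp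
qed

lemma V_eq: "B_vertices n k = layer n k \<union> layer n (k+1)"
  unfolding B_vertices_def layer_def by auto

theorem corollary3p9:
  fixes n k :: nat and f :: "nat set \<Rightarrow> nat set"
  assumes "n \<ge> 4" and "1 \<le> k" and "2 * k < n"
    and "B_automorphism n k f"
  shows "(n \<noteq> 2 * k + 1 \<longrightarrow> f ` layer n k = layer n k \<and> f ` layer n (k + 1) = layer n (k + 1)) \<and>
         (n = 2 * k + 1 \<longrightarrow>
            (f ` layer n k = layer n k \<and> f ` layer n (k + 1) = layer n (k + 1)) \<or>
            (f ` layer n k = layer n (k + 1) \<and> f ` layer n (k + 1) = layer n k))"
proof -
  define V where "V = B_vertices n k"
  define L1 where "L1 = layer n k"
  define L2 where "L2 = layer n (k+1)"
  have VL: "V = L1 \<union> L2" unfolding V_def L1_def L2_def by (rule V_eq)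
  have bij: "bij_betw f V V" and adjf: "\<And>v w. v \<in> V \<Longrightarrow> w \<in> V \<Longrightarrow> B_adj (f v) (f w) = B_adj v w"
    using assms(4) unfolding B_automorphism_def V_def by auto
  have fV: "f ` V = V" using bij bij_betw_imp_surj_on by blast
  have fin: "\<And>v. v \<in> V \<Longrightarrow> finite v" unfolding V_def B_vertices_def by (auto intro: finite_subset)
  have cardV: "\<And>v. v \<in> V \<Longrightarrow> card v = k \<or> card v = k+1" unfolding V_def B_vertices_def by auto
  have subV: "\<And>v. v \<in> V \<Longrightarrow> v \<subseteq> {1..n}" unfolding V_def B_vertices_def by auto
  define Q where "Q v = (f v \<in> layer n (card v))" for v
  have Qiff: "\<And>v. v \<in> V \<Longrightarrow> Q v = (card (f v) = card v)"
    unfolding Q_def layer_def using subV fV by blast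
  have sub_lemma: "Q v = Q w" if v: "v \<in> V" and w: "w \<in> V" and vw: "v \<subset> w" for v w
  proof -
    have "card v < card w" using vw fin w psubset_card_mono by blast
    have cv: "card v = k" using \<open>card v < card w\<close> cardV[OF v] cardV[OF w] by linarith
    have cw: "card w = k+1" using \<open>card v < card w\<close> cardV[OF v] cardV[OF w] by linarith
    have fv: "f v \<in> V" and fw: "f w \<in> V" using fV v w by blast+
    have "B_adj v w" unfolding B_adj_def using vw by blast
    hence "B_adj (f v) (f w)" using adjf[OF v w] by simp
    hence "f v \<subset> f w \<or> f w \<subset> f v" unfolding B_adj_def .
    hence "card (f v) < card (f w) \<or> card (f w) < card (f v)"
      using fin[OF fv] fin[OF fw] psubset_card_mono by blast
    hence "(card (f v) = k) = (card (f w) = k+1)" using cardV[OF fv] cardV[OF fw] by linarith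
    thus ?thesis using Qiff v w cv cw by simp
  qed
  have adjQ: "\<And>v w. v \<in> B_vertices n k \<Longrightarrow> w \<in> B_vertices n k \<Longrightarrow> B_adj v w \<Longrightarrow> Q v = Q w"
    using sub_lemma unfolding V_def B_adj_def by metis
  define A0 where "A0 = {1..k}"
  have A0: "A0 \<in> L1" unfolding A0_def L1_def layer_def using assms by auto
  have conn: "Q A = Q B" if "A \<in> L1" "B \<in> L1" for A B
    apply (rule k_conn[where Q=Q and n=n and k=k and m="card (A-B)" and A=A and B=B])
    using adjQ that unfolding L1_def by auto
  have allQ: "Q v = Q A0" if v: "v \<in> V" for v
  proof (cases "v \<in> L1")
    case True
    then show ?thesis using conn A0 by blast
  next
    case False
    hence vL2: "v \<in> L2" using VL v by blast
    hence cv: "card v = k+1" and sv: "v \<subseteq> {1..n}" unfolding L2_def layer_def by auto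
    then obtain x where x: "x \<in> v" by (metis card.empty ex_in_conv nat.distinct(1) Suc_eq_plus1)
    have fv: "finite v" using fin v by blast
    have u: "v - {x} \<in> L1" unfolding L1_def layer_def using cv sv x fv by auto
    hence "Q (v - {x}) = Q A0" using conn A0 by blast
    moreover have "Q (v - {x}) = Q v" using sub_lemma[of "v - {x}" v] u v x VL by blast
    ultimately show ?thesis by simp
  qed
  have L12: "L1 \<inter> L2 = {}" unfolding L1_def L2_def layer_def by auto
  have cL1: "\<And>v. v \<in> L1 \<Longrightarrow> card v = k" and cL2: "\<And>v. v \<in> L2 \<Longrightarrow> card v = k+1"
    unfolding L1_def L2_def layer_def by auto
  show ?thesis
  proof (cases "Q A0")
    case True
    have i1: "f ` L1 \<subseteq> L1"
    proof
      fix y assume "y \<in> f ` L1"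
      then obtain x where x: "x \<in> L1" "y = f x" by blast
      hence "Q x" using allQ VL True by blast
      thus "y \<in> L1" using cL1[OF x(1)] x(2) unfolding Q_def L1_def by simp
    qed
    have i2: "f ` L2 \<subseteq> L2"
    proof
      fix y assume "y \<in> f ` L2"
      then obtain x where x: "x \<in> L2" "y = f x" by blast
      hence "Q x" using allQ VL True by blast
      thus "y \<in> L2" using cL2[OF x(1)] x(2) unfolding Q_def L2_def by simp
    qed
    have "L1 \<subseteq> f ` L1"
    proof
      fix y assume y: "y \<in> L1"
      then obtain x where x: "x \<in> V" "y = f x" using fV VL by (metis UnI1 imageE)
      have "x \<notin> L2" using i2 x y L12 by blast
      thus "y \<in> f ` L1" using x VL by blast
    qed
    moreover have "L2 \<subseteq> f ` L2"
    proof
      fix y assume y: "y \<in> L2"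
      then obtain x where x: "x \<in> V" "y = f x" using fV VL by (metis UnI2 imageE)
      have "x \<notin> L1" using i1 x y L12 by blast
      thus "y \<in> f ` L2" using x VL by blast
    qed
    ultimately show ?thesis using i1 i2 unfolding L1_def L2_def by blast
  next
    case False
    have i1: "f ` L1 \<subseteq> L2"
    proof
      fix y assume "y \<in> f ` L1"
      then obtain x where x: "x \<in> L1" "y = f x" by blast
      hence "\<not> Q x" using allQ VL False by blast
      moreover have "y \<in> V" using fV x VL by blast
      ultimately show "y \<in> L2" using cL1[OF x(1)] x(2) VL cL2 unfolding Q_def L1_def by auto
    qed
    have i2: "f ` L2 \<subseteq> L1"
    proof
      fix y assume "y \<in> f ` L2"
      then obtain x where x: "x \<in> L2" "y = f x" by blast
      hence "\<not> Q x" using allQ VL False by blast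
      moreover have "y \<in> V" using fV x VL by blast
      ultimately show "y \<in> L1" using cL2[OF x(1)] x(2) VL cL1 unfolding Q_def L2_def by auto
    qed
    have e1: "f ` L1 = L2"
    proof (rule antisym[OF i1], rule subsetI)
      fix y assume y: "y \<in> L2"
      then obtain x where x: "x \<in> V" "y = f x" using fV VL by (metis UnI2 imageE)
      have "x \<notin> L2" using i2 x y L12 by blast
      thus "y \<in> f ` L1" using x VL by blast
    qed
    have e2: "f ` L2 = L1"
    proof (rule antisym[OF i2], rule subsetI)
      fix y assume y: "y \<in> L1"
      then obtain x where x: "x \<in> V" "y = f x" using fV VL by (metis UnI1 imageE)
      have "x \<notin> L1" using i1 x y L12 by blast
      thus "y \<in> f ` L2" using x VL by blast
    qed
    have injV: "inj_on f V" using bij bij_betw_def by blast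
    have "card L1 = card L2" using e1 card_image inj_on_subset[OF injV] VL by (metis Un_upper1)
    have "n choose k > 0" using assms by simp
    have "n choose k = n choose (k+1)" using \<open>card L1 = card L2\<close> unfolding L1_def L2_def layer_def
      using n_subsets[of "{1..n}"] by simp
    moreover have "(k+1) * (n choose (k+1)) = (n - k) * (n choose k)"
    proof -
      have "Suc n * (n choose k) = ((n choose k) + (n choose Suc k)) * Suc k"
        using Suc_times_binomial_eq[of n k] by simp
      hence "(n - k) * (n choose k) + Suc k * (n choose k) = (n choose Suc k) * Suc k + (n choose k) * Suc k"
        using assms(3) by (simp add: algebra_simps add_mult_distrib[symmetric])
      thus ?thesis by (simp add: algebra_simps)
    qed
    ultimately have "(n choose k) * (k+1) = (n choose k) * (n - k)" by (simp add: mult.commute)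
    hence "k + 1 = n - k" using \<open>n choose k > 0\<close> mult_left_cancel[of "n choose k" "k+1" "n-k"] by simp
    hence "n = 2*k+1" using assms by linarith
    then show ?thesis using e1 e2 unfolding L1_def L2_def by blast
  qed
qed

end
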